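(* Let $K$ be a field. For every positive integer $N$ there exist an integer $d\ge 2$ and integers $t_1<t_2<\cdots<t_{2d+1}$ such that the toric ideal $I_A\subset K[x_1,\ldots,x_{2d+1}]$ of the cyclic configuration $A=\{{\bf a}_{t_1},\ldots,{\bf a}_{t_{2d+1}}\}$ (which has height $2$) satisfies $\mathrm{Split}(I_A)\ge N$ and $\mathrm{Split}_{\mathrm{rad}}(I_A)\ge N$.
   Context: For an integer $t$ and an integer $d\ge 2$, ${\bf a}_t=(1,t,t^2,\ldots,t^{2d-2})^T\in\mathbb{Z}^{2d-1}$. The cyclic configuration $A$ is the set of columns of the $(2d-1)\times(2d+1)$ Vandermonde matrix $({\bf a}_{t_1}\ {\bf a}_{t_2}\ \cdots\ {\bf a}_{t_{2d+1}})$ with $t_1<\cdots<t_{2d+1}$ integers. The toric ideal $I_A$ is the kernel of $K[x_1,\ldots,x_{2d+1}]\to K[s_1^{\pm1},\ldots,s_{2d-1}^{\pm1}]$, $x_i\mapsto{\bf s}^{{\bf a}_{t_i}}$. $\mathrm{Split}(I_A)$ is the smallest integer $s$ such that there exist toric ideals $I_{A_1},\ldots,I_{A_s}\subset K[x_1,\ldots,x_{2d+1}]$ with $I_A=I_{A_1}+\cdots+I_{A_s}$ and $I_{A_i}\ne I_A$ for all $i$; $\mathrm{Split}_{\mathrm{rad}}(I_A)$ is the smallest integer $r$ such that there exist toric ideals $I_{A_1},\ldots,I_{A_r}$ with $I_A=\mathrm{rad}(I_{A_1}+\cdots+I_{A_r})$ and $I_{A_i}\ne I_A$ for all $i$. 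*)

theory Defs
  imports Main "HOL-Library.Poly_Mapping"
begin

(* Polynomials over a field K in variables x_0, x_1, ... : finitely supported maps from
 exponent vectors (nat \<Rightarrow>\<^sub>0 nat) to coefficients, with convolution product.
 Variable x_i (paper's x_(i+1)) corresponds to index i. *)
type_synonym 'k mpoly = "(nat \<Rightarrow>\<^sub>0 nat) \<Rightarrow>\<^sub>0 'k"

definition poly_ring :: "nat \<Rightarrow> ('k::zero) mpoly set" where
  "poly_ring n = {f. \<forall>m \<in> Poly_Mapping.keys f. \<forall>i. Poly_Mapping.lookup m i \<noteq> 0 \<longrightarrow> i < n}"

(* A configuration of n vectors in Z^r is given by a :: nat \<Rightarrow> nat \<Rightarrow> int, where
 a i j is the j-th coordinate of the i-th vector (i < n, j < r).
 The monomial map x_i \<mapsto> s^(a i) sends x^m to s^(expo r a m). *)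
definition expo :: "nat \<Rightarrow> (nat \<Rightarrow> nat \<Rightarrow> int) \<Rightarrow> (nat \<Rightarrow>\<^sub>0 nat) \<Rightarrow> (nat \<Rightarrow> int)" where
  "expo r a m = (\<lambda>j. if j < r then (\<Sum>i\<in>Poly_Mapping.keys m. int (Poly_Mapping.lookup m i) * a i j) else 0)"

(* Toric ideal: kernel of the K-algebra map K[x_0..x_(n-1)] \<rightarrow> K[s_0^(\<plusminus>1),...,s_(r-1)^(\<plusminus>1)],
 x_i \<mapsto> s^(a i). The image of f has, at the Laurent monomial s^e, the coefficient
 sum of the coefficients of f at monomials m with expo r a m = e; f is in the kernel iff
 all these coefficients vanish. *)
definition toric_ideal :: "nat \<Rightarrow> nat \<Rightarrow> (nat \<Rightarrow> nat \<Rightarrow> int) \<Rightarrow> ('k::field) mpoly set" where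
  "toric_ideal n r a = {f \<in> poly_ring n.
      \<forall>e. (\<Sum>m \<in> {m \<in> Poly_Mapping.keys f. expo r a m = e}. Poly_Mapping.lookup f m) = 0}"

definition ideal_sum :: "nat \<Rightarrow> (nat \<Rightarrow> ('k::field) mpoly set) \<Rightarrow> 'k mpoly set" where
  "ideal_sum s I = {\<Sum>i<s. f i | f. \<forall>i<s. f i \<in> I i}"

definition radical_in :: "nat \<Rightarrow> ('k::field) mpoly set \<Rightarrow> 'k mpoly set" where
  "radical_in n J = {f \<in> poly_ring n. \<exists>k>0. f ^ k \<in> J}"

(* The cyclic configuration: column i (i < 2d+1) is a_(t i) = (1, t i, ..., (t i)^(2d-2)) in Z^(2d-1). *)
definition cyclic_config :: "nat \<Rightarrow> (nat \<Rightarrow> int) \<Rightarrow> nat \<Rightarrow> nat \<Rightarrow> int" where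
  "cyclic_config d t = (\<lambda>i j. t i ^ j)"

definition has_splitting :: "nat \<Rightarrow> ('k::field) mpoly set \<Rightarrow> nat \<Rightarrow> bool" where
  "has_splitting n I s \<longleftrightarrow> (\<exists>(r :: nat \<Rightarrow> nat) (a :: nat \<Rightarrow> nat \<Rightarrow> nat \<Rightarrow> int).
      (\<forall>i<s. toric_ideal n (r i) (a i) \<noteq> I) \<and>
      I = ideal_sum s (\<lambda>i. toric_ideal n (r i) (a i)))"

definition has_rad_splitting :: "nat \<Rightarrow> ('k::field) mpoly set \<Rightarrow> nat \<Rightarrow> bool" where
  "has_rad_splitting n I s \<longleftrightarrow> (\<exists>(r :: nat \<Rightarrow> nat) (a :: nat \<Rightarrow> nat \<Rightarrow> nat \<Rightarrow> int).
      (\<forall>i<s. toric_ideal n (r i) (a i) \<noteq> I) \<and>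
      I = radical_in n (ideal_sum s (\<lambda>i. toric_ideal n (r i) (a i))))"

end

theory Submission
  imports Defs "HOL-Computational_Algebra.Polynomial"
begin


definition chi :: "nat set \<Rightarrow> (nat \<Rightarrow>\<^sub>0 nat) \<Rightarrow> 'k::field" where
  "chi T m = (if Poly_Mapping.keys m \<subseteq> T then 1 else 0)"

definition ev :: "nat set \<Rightarrow> 'k::field mpoly \<Rightarrow> 'k" where
  "ev T f = (\<Sum>m\<in>Poly_Mapping.keys f. Poly_Mapping.lookup f m * chi T m)"

lemma ev_superset:
  assumes "finite M" "Poly_Mapping.keys f \<subseteq> M"
  shows "ev T f = (\<Sum>m\<in>M. Poly_Mapping.lookup f m * chi T m)"
  unfolding ev_def
  by (rule sum.mono_neutral_left) (use assms in \<open>auto simp: in_keys_iff\<close>)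

lemma ev_add: "ev T (f + g) = ev T f + ev T g"
proof -
  let ?M = "Poly_Mapping.keys f \<union> Poly_Mapping.keys g"
  have "ev T (f+g) = (\<Sum>m\<in>?M. Poly_Mapping.lookup (f+g) m * chi T m)"
    by (rule ev_superset) (auto dest: set_mp[OF keys_add])
  also have "\<dots> = (\<Sum>m\<in>?M. Poly_Mapping.lookup f m * chi T m) + (\<Sum>m\<in>?M. Poly_Mapping.lookup g m * chi T m)"
    by (simp add: lookup_add distrib_right sum.distrib)
  also have "\<dots> = ev T f + ev T g"
    using ev_superset[of ?M f T] ev_superset[of ?M g T] by simp
  finally show ?thesis .
qed

lemma ev_diff: "ev T (f - g) = ev T f - ev T g"
proof -
  let ?M = "Poly_Mapping.keys f \<union> Poly_Mapping.keys g"
  have "ev T (f-g) = (\<Sum>m\<in>?M. Poly_Mapping.lookup (f-g) m * chi T m)"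
    by (rule ev_superset) (auto dest: set_mp[OF keys_diff])
  also have "\<dots> = (\<Sum>m\<in>?M. Poly_Mapping.lookup f m * chi T m) - (\<Sum>m\<in>?M. Poly_Mapping.lookup g m * chi T m)"
    by (simp add: lookup_minus left_diff_distrib sum_subtractf)
  also have "\<dots> = ev T f - ev T g"
    using ev_superset[of ?M f T] ev_superset[of ?M g T] by simp
  finally show ?thesis .
qed

lemma ev_zero[simp]: "ev T 0 = 0"
  by (simp add: ev_def)

lemma ev_sum: "finite I \<Longrightarrow> ev T (\<Sum>i\<in>I. f i) = (\<Sum>i\<in>I. ev T (f i))"
  by (induction I rule: finite_induct) (auto simp: ev_add)

lemma ev_single: "ev T (Poly_Mapping.single m c) = c * chi T m"
  by (simp add: ev_def)

lemma keys_add_nat: "Poly_Mapping.keys (a + b :: nat \<Rightarrow>\<^sub>0 nat) = Poly_Mapping.keys a \<union> Poly_Mapping.keys b"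
  by (auto simp: in_keys_iff lookup_add)

lemma chi_add: "chi T (a + b) = chi T a * chi T b"
  by (simp add: chi_def keys_add_nat)

lemma ev_one: "ev T 1 = 1"
  by (simp add: ev_def lookup_one chi_def)

lemma lookup_mult_fin:
  "Poly_Mapping.lookup (f * g) k = (\<Sum>a\<in>Poly_Mapping.keys f. \<Sum>b\<in>Poly_Mapping.keys g.
     (Poly_Mapping.lookup f a * Poly_Mapping.lookup g b when k = a + b))"
proof -
  have "Poly_Mapping.lookup (f * g) k = (\<Sum>l. Poly_Mapping.lookup f l *
        (\<Sum>q. Poly_Mapping.lookup g q when k = l + q))"
    by (rule lookup_mult)
  also have "\<dots> = (\<Sum>l\<in>Poly_Mapping.keys f. Poly_Mapping.lookup f l *
        (\<Sum>q. Poly_Mapping.lookup g q when k = l + q))"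
    by (rule Sum_any.expand_superset) (auto simp: in_keys_iff)
  also have "\<dots> = (\<Sum>l\<in>Poly_Mapping.keys f. Poly_Mapping.lookup f l *
        (\<Sum>q\<in>Poly_Mapping.keys g. Poly_Mapping.lookup g q when k = l + q))"
    apply (rule sum.cong[OF refl])
    apply (subst Sum_any.expand_superset[of "Poly_Mapping.keys g"])
    by (auto simp: in_keys_iff when_def)
  also have "\<dots> = (\<Sum>a\<in>Poly_Mapping.keys f. \<Sum>b\<in>Poly_Mapping.keys g.
     (Poly_Mapping.lookup f a * Poly_Mapping.lookup g b when k = a + b))"
    by (simp add: sum_distrib_left when_def if_distrib cong: if_cong)
  finally show ?thesis .
qed

lemma ev_mult: "ev T (f * g) = ev T f * ev T g"
proof -
  let ?F = "Poly_Mapping.keys f" and ?G = "Poly_Mapping.keys g"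
  let ?K = "(\<lambda>(a,b). a + b) ` (?F \<times> ?G)"
  have finK: "finite ?K" by auto
  have "ev T (f*g) = (\<Sum>k\<in>?K. Poly_Mapping.lookup (f*g) k * chi T k)"
    by (rule ev_superset[OF finK]) (use keys_mult[of f g] in auto)
  also have "\<dots> = (\<Sum>k\<in>?K. \<Sum>a\<in>?F. \<Sum>b\<in>?G.
       (Poly_Mapping.lookup f a * Poly_Mapping.lookup g b * chi T k when k = a + b))"
    by (simp add: lookup_mult_fin sum_distrib_right when_mult)
  also have "\<dots> = (\<Sum>a\<in>?F. \<Sum>b\<in>?G. \<Sum>k\<in>?K.
       (Poly_Mapping.lookup f a * Poly_Mapping.lookup g b * chi T k when k = a + b))"
    by (subst sum.swap) (subst sum.swap, simp)
  also have "\<dots> = (\<Sum>a\<in>?F. \<Sum>b\<in>?G.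
       Poly_Mapping.lookup f a * Poly_Mapping.lookup g b * chi T (a + b))"
  proof (intro sum.cong refl)
    fix a b assume ab: "a \<in> ?F" "b \<in> ?G"
    have "a + b \<in> ?K" using ab by auto
    then show "(\<Sum>k\<in>?K. (Poly_Mapping.lookup f a * Poly_Mapping.lookup g b * chi T k when k = a + b))
        = Poly_Mapping.lookup f a * Poly_Mapping.lookup g b * chi T (a + b)"
      by (simp add: when_def sum.delta[OF finK])
  qed
  also have "\<dots> = (\<Sum>a\<in>?F. Poly_Mapping.lookup f a * chi T a) * (\<Sum>b\<in>?G. Poly_Mapping.lookup g b * chi T b)"
    by (simp add: chi_add sum_product mult_ac)
  finally show ?thesis by (simp add: ev_def)
qed

lemma ev_power: "ev T (f ^ k) = ev T f ^ k"
  by (induction k) (simp_all add: ev_one ev_mult)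



definition kerv :: "nat \<Rightarrow> nat \<Rightarrow> (nat \<Rightarrow> nat \<Rightarrow> int) \<Rightarrow> (nat \<Rightarrow> int) \<Rightarrow> bool" where
  "kerv n r a v \<longleftrightarrow> (\<forall>k<r. (\<Sum>i<n. v i * a i k) = 0)"

definition diffvec :: "(nat \<Rightarrow>\<^sub>0 nat) \<Rightarrow> (nat \<Rightarrow>\<^sub>0 nat) \<Rightarrow> nat \<Rightarrow> int" where
  "diffvec m m' = (\<lambda>i. int (Poly_Mapping.lookup m i) - int (Poly_Mapping.lookup m' i))"

definition bin :: "(nat \<Rightarrow>\<^sub>0 nat) \<Rightarrow> (nat \<Rightarrow>\<^sub>0 nat) \<Rightarrow> 'k::field mpoly" where
  "bin m m' = Poly_Mapping.single m 1 - Poly_Mapping.single m' 1"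

lemma expo_sum:
  assumes "Poly_Mapping.keys m \<subseteq> {..<n}"
  shows "expo r a m k = (if k < r then (\<Sum>i<n. int (Poly_Mapping.lookup m i) * a i k) else 0)"
proof -
  have "(\<Sum>i\<in>Poly_Mapping.keys m. int (Poly_Mapping.lookup m i) * a i k) =
        (\<Sum>i<n. int (Poly_Mapping.lookup m i) * a i k)"
    by (rule sum.mono_neutral_left) (use assms in \<open>auto simp: in_keys_iff\<close>)
  then show ?thesis by (simp add: expo_def)
qed

lemma expo_eq_iff:
  assumes "Poly_Mapping.keys m \<subseteq> {..<n}" "Poly_Mapping.keys m' \<subseteq> {..<n}"
  shows "expo r a m = expo r a m' \<longleftrightarrow> kerv n r a (diffvec m m')"
proof -
  have "(\<Sum>i<n. diffvec m m' i * a i k) = (\<Sum>i<n. int (Poly_Mapping.lookup m i) * a i k)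
     - (\<Sum>i<n. int (Poly_Mapping.lookup m' i) * a i k)" for k
    by (simp add: diffvec_def left_diff_distrib sum_subtractf)
  moreover have "expo r a m = expo r a m' \<longleftrightarrow> (\<forall>k<r. (\<Sum>i<n. int (Poly_Mapping.lookup m i) * a i k)
     = (\<Sum>i<n. int (Poly_Mapping.lookup m' i) * a i k))"
    unfolding fun_eq_iff expo_sum[OF assms(1)] expo_sum[OF assms(2)] by auto
  ultimately show ?thesis by (simp add: kerv_def)
qed

lemma poly_ring_keys:
  "f \<in> poly_ring n \<Longrightarrow> m \<in> Poly_Mapping.keys f \<Longrightarrow> Poly_Mapping.keys m \<subseteq> {..<n}"
  unfolding poly_ring_def by (auto simp: in_keys_iff)

lemma keys_lt: "Poly_Mapping.keys m \<subseteq> {..<n} \<Longrightarrow> Poly_Mapping.lookup m i \<noteq> 0 \<Longrightarrow> i < n"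
  by (metis in_keys_iff lessThan_iff subsetD)

lemma lookup_bin: "Poly_Mapping.lookup (bin m m' :: 'k::field mpoly) x =
   (if x = m then 1 else 0) - (if x = m' then 1 else 0)"
  by (simp add: bin_def lookup_minus lookup_single when_def)

lemma keys_bin: "m \<noteq> m' \<Longrightarrow> Poly_Mapping.keys (bin m m' :: 'k::field mpoly) = {m, m'}"
  by (auto simp: in_keys_iff lookup_bin split: if_splits)

lemma bin_same: "bin m m = 0"
  by (simp add: bin_def)

lemma zero_toric: "0 \<in> toric_ideal n r a"
  by (simp add: toric_ideal_def poly_ring_def)

lemma bin_in_toric:
  assumes "Poly_Mapping.keys m \<subseteq> {..<n}" "Poly_Mapping.keys m' \<subseteq> {..<n}"
    and "expo r a m = expo r a m'"
  shows "(bin m m' :: 'k::field mpoly) \<in> toric_ideal n r a"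
proof (cases "m = m'")
  case True then show ?thesis by (simp add: bin_same zero_toric)
next
  case False
  have pr: "(bin m m' :: 'k mpoly) \<in> poly_ring n"
    using assms(1,2) False unfolding poly_ring_def mem_Collect_eq keys_bin[OF False]
    using keys_lt[OF assms(1)] keys_lt[OF assms(2)] by blast
  have "(\<Sum>x\<in>{x \<in> Poly_Mapping.keys (bin m m' :: 'k mpoly). expo r a x = e}.
           Poly_Mapping.lookup (bin m m' :: 'k mpoly) x) = 0" for e
  proof (cases "expo r a m = e")
    case True
    then have "{x \<in> Poly_Mapping.keys (bin m m' :: 'k mpoly). expo r a x = e} = {m, m'}"
      using assms(3) False by (auto simp: keys_bin)
    then show ?thesis using False by (simp add: lookup_bin)
  next
    case F: False
    have E: "{x \<in> Poly_Mapping.keys (bin m m' :: 'k mpoly). expo r a x = e} = {}"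
      using F assms(3) False by (auto simp: keys_bin)
    show ?thesis unfolding E by simp
  qed
  then show ?thesis using pr by (simp add: toric_ideal_def)
qed

lemma toric_bin:
  assumes "m \<noteq> m'" "(bin m m' :: 'k::field mpoly) \<in> toric_ideal n r a"
  shows "expo r a m = expo r a m'"
proof (rule ccontr)
  assume ne: "expo r a m \<noteq> expo r a m'"
  have "{x \<in> Poly_Mapping.keys (bin m m' :: 'k mpoly). expo r a x = expo r a m} = {m}"
    using assms(1) ne by (auto simp: keys_bin)
  moreover have "(\<Sum>x\<in>{x \<in> Poly_Mapping.keys (bin m m' :: 'k mpoly). expo r a x = expo r a m}.
           Poly_Mapping.lookup (bin m m' :: 'k mpoly) x) = 0"
    using assms(2) by (simp add: toric_ideal_def)
  ultimately show False using assms(1) by (simp add: lookup_bin)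
qed

lemma fiber_zero:
  assumes f: "f \<in> (toric_ideal n r a :: 'k::field mpoly set)" and S: "S \<subseteq> Poly_Mapping.keys f"
    and cl: "\<And>x y. x \<in> S \<Longrightarrow> y \<in> Poly_Mapping.keys f \<Longrightarrow> expo r a y = expo r a x \<Longrightarrow> y \<in> S"
  shows "(\<Sum>x\<in>S. Poly_Mapping.lookup f x) = 0"
proof -
  have finS: "finite S" by (rule finite_subset[OF S]) simp
  have "(\<Sum>x\<in>S. Poly_Mapping.lookup f x) =
      (\<Sum>e\<in>expo r a ` S. \<Sum>x\<in>{x\<in>S. expo r a x = e}. Poly_Mapping.lookup f x)"
    by (rule sum.image_gen[OF finS])
  also have "\<dots> = 0"
  proof (rule sum.neutral, rule ballI)
    fix e assume "e \<in> expo r a ` S"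
    then obtain x0 where x0: "x0 \<in> S" "e = expo r a x0" by blast
    have "{x\<in>S. expo r a x = e} = {x \<in> Poly_Mapping.keys f. expo r a x = e}"
    proof (intro set_eqI iffI)
      fix x assume "x \<in> {x\<in>S. expo r a x = e}"
      then show "x \<in> {x \<in> Poly_Mapping.keys f. expo r a x = e}" using S by blast
    next
      fix x assume x: "x \<in> {x \<in> Poly_Mapping.keys f. expo r a x = e}"
      then have "x \<in> S" using cl[OF x0(1), of x] x0(2) by simp
      then show "x \<in> {x\<in>S. expo r a x = e}" using x by simp
    qed
    then show "(\<Sum>x\<in>{x\<in>S. expo r a x = e}. Poly_Mapping.lookup f x) = 0"
      using f by (simp add: toric_ideal_def)
  qed
  finally show ?thesis .
qed

lemma toric_sub:
  assumes "\<And>m m'. Poly_Mapping.keys m \<subseteq> {..<n} \<Longrightarrow> Poly_Mapping.keys m' \<subseteq> {..<n} \<Longrightarrow>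
      expo r a m = expo r a m' \<Longrightarrow> expo r' a' m = expo r' a' m'"
  shows "(toric_ideal n r a :: 'k::field mpoly set) \<subseteq> toric_ideal n r' a'"
proof
  fix f :: "'k mpoly" assume f: "f \<in> toric_ideal n r a"
  then have pr: "f \<in> poly_ring n" by (simp add: toric_ideal_def)
  have "(\<Sum>x\<in>{x \<in> Poly_Mapping.keys f. expo r' a' x = e}. Poly_Mapping.lookup f x) = 0" for e
  proof (rule fiber_zero[OF f])
    fix x y assume x: "x \<in> {x \<in> Poly_Mapping.keys f. expo r' a' x = e}" and y: "y \<in> Poly_Mapping.keys f"
      and xy: "expo r a y = expo r a x"
    have "expo r' a' y = expo r' a' x"
      by (rule assms) (use x y xy poly_ring_keys[OF pr] in auto)
    then show "y \<in> {x \<in> Poly_Mapping.keys f. expo r' a' x = e}" using x y by simp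
  qed auto
  then show "f \<in> toric_ideal n r' a'" using pr by (simp add: toric_ideal_def)
qed

definition good :: "nat \<Rightarrow> nat \<Rightarrow> (nat \<Rightarrow> nat \<Rightarrow> int) \<Rightarrow> nat set \<Rightarrow> bool" where
  "good n r a T \<longleftrightarrow> (\<forall>m m'. Poly_Mapping.keys m \<subseteq> {..<n} \<longrightarrow> Poly_Mapping.keys m' \<subseteq> {..<n} \<longrightarrow>
      expo r a m = expo r a m' \<longrightarrow> (Poly_Mapping.keys m \<subseteq> T \<longleftrightarrow> Poly_Mapping.keys m' \<subseteq> T))"

lemma ev_toric_zero:
  assumes g: "good n r a T" and f: "f \<in> (toric_ideal n r a :: 'k::field mpoly set)"
  shows "ev T f = 0"
proof -
  have pr: "f \<in> poly_ring n" using f by (simp add: toric_ideal_def)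
  have "ev T f = (\<Sum>m\<in>{m\<in>Poly_Mapping.keys f. Poly_Mapping.keys m \<subseteq> T}. Poly_Mapping.lookup f m)"
    unfolding ev_def chi_def by (simp add: sum.inter_filter[symmetric] if_distrib cong: if_cong)
  also have "\<dots> = 0"
  proof (rule fiber_zero[OF f])
    fix x y assume x: "x \<in> {m\<in>Poly_Mapping.keys f. Poly_Mapping.keys m \<subseteq> T}" and y: "y \<in> Poly_Mapping.keys f"
      and xy: "expo r a y = expo r a x"
    have "Poly_Mapping.keys y \<subseteq> T \<longleftrightarrow> Poly_Mapping.keys x \<subseteq> T"
      using g xy poly_ring_keys[OF pr] x y unfolding good_def by blast
    then show "y \<in> {m\<in>Poly_Mapping.keys f. Poly_Mapping.keys m \<subseteq> T}" using x y by simp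
  qed auto
  finally show ?thesis .
qed



definition Lv :: "nat \<Rightarrow> (nat \<Rightarrow> int) \<Rightarrow> bool" where
  "Lv d v = kerv (2*d+1) (2*d-1) (cyclic_config d int) v"

lemma Lv_iff: "Lv d v \<longleftrightarrow> (\<forall>k<2*d-1. (\<Sum>j<2*d+1. v j * int j ^ k) = 0)"
  by (simp add: Lv_def kerv_def cyclic_config_def)

lemma polysum:
  assumes "Lv d v" "degree p \<le> 2*d-2" "d \<ge> 1"
  shows "(\<Sum>j<2*d+1. v j * poly p (int j)) = 0"
proof -
  have "(\<Sum>j<2*d+1. v j * poly p (int j)) = (\<Sum>j<2*d+1. \<Sum>i\<le>degree p. coeff p i * (v j * int j ^ i))"
    by (simp add: poly_altdef sum_distrib_left mult_ac)
  also have "\<dots> = (\<Sum>i\<le>degree p. coeff p i * (\<Sum>j<2*d+1. v j * int j ^ i))"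
    by (subst sum.swap) (simp add: sum_distrib_left del: sum.lessThan_Suc)
  also have "\<dots> = 0"
  proof (rule sum.neutral, rule ballI)
    fix i assume "i \<in> {..degree p}"
    then have "i < 2*d-1" using assms(2,3) by auto
    then show "coeff p i * (\<Sum>j<2*d+1. v j * int j ^ i) = 0" using assms(1) by (simp add: Lv_iff)
  qed
  finally show ?thesis .
qed

lemma degree_linprod:
  fixes S :: "nat set"
  shows "degree (\<Prod>i\<in>S. [:- int i, 1:]) \<le> card S"
proof -
  have "degree (\<Prod>i\<in>S. [:- int i, 1:]) \<le> (\<Sum>i\<in>S. degree [:- int i, 1:])"
    by (cases "finite S") (use degree_prod_sum_le[of S "\<lambda>i. [:- int i, 1:]"] in auto)
  also have "\<dots> = card S" by simp
  finally show ?thesis .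
qed

lemma poly_linprod: "poly (\<Prod>i\<in>S. [:- int i, 1:]) x = (\<Prod>i\<in>S. x - int i)"
  by (simp add: poly_prod)

lemma vander:
  assumes L: "Lv d v" and d: "d \<ge> 1" and S: "S \<subseteq> {..<2*d+1}" "card S \<le> 2*d-1"
    and z: "\<And>j. j < 2*d+1 \<Longrightarrow> j \<notin> S \<Longrightarrow> v j = 0" and j: "j < 2*d+1"
  shows "v j = 0"
proof (cases "j \<in> S")
  case False
  then show ?thesis using z j by blast
next
  case True
  have finS: "finite S" using S(1) finite_subset by blast
  define Q where "Q = (\<Prod>i\<in>S-{j}. [:- int i, 1:])"
  have "degree Q \<le> card (S - {j})" unfolding Q_def by (rule degree_linprod)
  also have "\<dots> = card S - 1" using True finS by simp
  finally have dQ: "degree Q \<le> 2*d-2" using S(2) by linarith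
  have "0 = (\<Sum>l<2*d+1. v l * poly Q (int l))"
    using polysum[OF L dQ d] by simp
  also have "\<dots> = v j * poly Q (int j) + (\<Sum>l\<in>{..<2*d+1}-{j}. v l * poly Q (int l))"
    using j by (subst sum.remove[of _ j]) auto
  also have "(\<Sum>l\<in>{..<2*d+1}-{j}. v l * poly Q (int l)) = 0"
  proof (rule sum.neutral, rule ballI)
    fix l assume l: "l \<in> {..<2*d+1}-{j}"
    show "v l * poly Q (int l) = 0"
    proof (cases "l \<in> S")
      case True
      then have "l \<in> S - {j}" using l by simp
      then have "poly Q (int l) = 0" unfolding Q_def poly_linprod
        using finS by (auto intro!: prod_zero)
      then show ?thesis by simp
    next
      case False
      then show ?thesis using z l by simp
    qed
  qed
  finally have "v j * poly Q (int j) = 0" by simp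
  moreover have "poly Q (int j) \<noteq> 0" unfolding Q_def poly_linprod
    using finS by (simp add: prod_zero_iff)
  ultimately show ?thesis by simp
qed

lemma sign_lemma:
  assumes L: "Lv d v" and d: "d \<ge> 1" and nz: "j0 < 2*d+1" "v j0 \<noteq> 0"
    and S: "S \<subseteq> {..<2*d+1}" and neg: "\<And>j. j < 2*d+1 \<Longrightarrow> j \<notin> S \<Longrightarrow> v j \<le> 0"
  shows "d \<le> card S"
proof (rule ccontr)
  assume "\<not> d \<le> card S"
  then have cS: "card S < d" by simp
  have finS: "finite S" using S finite_subset by blast
  define P where "P = (\<Prod>i\<in>S. [:- int i, 1:] * [:- int i, 1:])"
  have "degree P \<le> (\<Sum>i\<in>S. degree ([:- int i, 1:] * [:- int i, 1:]))"
    unfolding P_def using degree_prod_sum_le[OF finS, of "\<lambda>i. [:- int i, 1:] * [:- int i, 1:]"]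
    by (simp only: o_def)
  also have "\<dots> \<le> (\<Sum>i\<in>S. 2)"
  proof (rule sum_mono)
    fix i assume "i \<in> S"
    show "degree ([:- int i, 1:] * [:- int i, 1:]) \<le> 2"
      using degree_mult_le[of "[:- int i, 1:]" "[:- int i, 1:]"] by simp
  qed
  also have "\<dots> = 2 * card S" by simp
  finally have dP: "degree P \<le> 2*d-2" using cS by linarith
  have polyP: "poly P (int l) = (\<Prod>i\<in>S. (int l - int i) * (int l - int i))" for l
    unfolding P_def poly_prod by (rule prod.cong) (simp_all add: algebra_simps)
  have Pnn: "poly P (int l) \<ge> 0" for l
    unfolding polyP by (rule prod_nonneg) simp
  have Ppos: "l \<notin> S \<Longrightarrow> poly P (int l) > 0" for l
    unfolding polyP
  proof (rule prod_pos)
    fix a assume "l \<notin> S" "a \<in> S"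
    then have "int l - int a \<noteq> 0" by auto
    then show "0 < (int l - int a) * (int l - int a)"
      by (cases "int l - int a > 0") (auto simp: mult_neg_neg)
  qed
  have P0: "l \<in> S \<Longrightarrow> poly P (int l) = 0" for l
    unfolding polyP using finS by (auto intro!: prod_zero)
  have sum0: "(\<Sum>l<2*d+1. - (v l * poly P (int l))) = 0"
    using polysum[OF L dP d] by (simp add: sum_negf)
  have nn: "\<forall>l\<in>{..<2*d+1}. - (v l * poly P (int l)) \<ge> 0"
  proof
    fix l assume l: "l \<in> {..<2*d+1}"
    show "- (v l * poly P (int l)) \<ge> 0"
    proof (cases "l \<in> S")
      case True then show ?thesis using P0 by simp
    next
      case False
      then have "v l \<le> 0" using neg l by simp
      then show ?thesis using Pnn[of l] by (simp add: mult_nonpos_nonneg)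
    qed
  qed
  have all0: "\<forall>l\<in>{..<2*d+1}. - (v l * poly P (int l)) = 0"
    using sum_nonneg_eq_0_iff[of "{..<2*d+1}" "\<lambda>l. - (v l * poly P (int l))"] nn sum0 by simp
  have z: "v l = 0" if "l < 2*d+1" "l \<notin> S" for l
    using all0 that Ppos[OF that(2)] by auto
  have "card S \<le> 2*d-1" using cS by linarith
  then have "v j0 = 0" using vander[OF L d S _ z nz(1)] by blast
  then show False using nz(2) by simp
qed



definition D :: "nat \<Rightarrow> (nat \<Rightarrow> int) \<Rightarrow> int" where
  "D M f = (\<Sum>j\<le>M. (-1)^j * int (M choose j) * f j)"

lemma D_pascal: "D (Suc M) f = D M f - D M (\<lambda>j. f (Suc j))"
proof -
  have A: "D (Suc M) f = f 0 + (\<Sum>j\<le>M. (-1)^(Suc j) * int (Suc M choose Suc j) * f (Suc j))"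
    unfolding D_def by (subst sum.atMost_Suc_shift) simp
  have B: "(\<Sum>j\<le>M. (-1)^(Suc j) * int (Suc M choose Suc j) * f (Suc j)) =
     - (\<Sum>j\<le>M. (-1)^j * int (M choose j) * f (Suc j)) + (\<Sum>j\<le>M. (-1)^(Suc j) * int (M choose Suc j) * f (Suc j))"
    by (simp add: sum_negf[symmetric] sum.distrib[symmetric] algebra_simps)
  have C: "D M f = (\<Sum>j\<le>Suc M. (-1)^j * int (M choose j) * f j)"
    unfolding D_def by simp
  also have "\<dots> = f 0 + (\<Sum>j\<le>M. (-1)^(Suc j) * int (M choose Suc j) * f (Suc j))"
    by (subst sum.atMost_Suc_shift) simp
  finally have C': "D M f = f 0 + (\<Sum>j\<le>M. (-1)^(Suc j) * int (M choose Suc j) * f (Suc j))" .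
  show ?thesis unfolding A B C' by (simp add: D_def)
qed

lemma D_diff: "D M f - D M g = D M (\<lambda>j. f j - g j)"
  by (simp add: D_def sum_subtractf[symmetric] algebra_simps)

lemma degree_shift_diff:
  fixes p :: "int poly"
  assumes "degree p > 0"
  shows "degree (p - pcompose p [:1, 1:]) < degree p"
proof (rule ccontr)
  let ?q = "p - pcompose p [:1, 1:]"
  assume "\<not> degree ?q < degree p"
  moreover have "degree ?q \<le> degree p"
    using degree_diff_le[of p "degree p" "pcompose p [:1, 1:]"] by (simp add: degree_pcompose)
  ultimately have eq: "degree ?q = degree p" by simp
  have "coeff (pcompose p [:1, 1:]) (degree p) = lead_coeff p"
    using lead_coeff_comp[of "[:1, 1:]" p] by (simp add: degree_pcompose)
  then have "coeff ?q (degree ?q) = 0" using eq by simp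
  then have "?q = 0" by (simp only: leading_coeff_0_iff)
  then show False using eq assms by simp
qed

lemma D_poly:
  assumes "M \<ge> 1" "degree p < M"
  shows "D M (\<lambda>j. poly p (int j)) = 0"
  using assms
proof (induction M arbitrary: p rule: nat_induct_at_least)
  case base
  then have "degree p = 0" by simp
  then obtain c where "p = [:c:]" by (metis degree_eq_zeroE)
  then show ?case by (simp add: D_def)
next
  case (Suc M)
  define q where "q = p - pcompose p [:1, 1:]"
  have pq: "poly q (int j) = poly p (int j) - poly p (int (Suc j))" for j
    by (simp add: q_def poly_pcompose algebra_simps)
  have dq: "degree q < M"
  proof (cases "degree p = 0")
    case True
    then obtain c where "p = [:c:]" by (metis degree_eq_zeroE)
    then have "q = 0" by (simp add: q_def)
    then show ?thesis using Suc.hyps by simp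
  next
    case False
    then show ?thesis using degree_shift_diff[of p] Suc.prems unfolding q_def by simp
  qed
  have "D (Suc M) (\<lambda>j. poly p (int j)) = D M (\<lambda>j. poly q (int j))"
    by (simp add: D_pascal D_diff pq)
  also have "\<dots> = 0" by (rule Suc.IH[OF dq])
  finally show ?case .
qed

definition circ :: "nat \<Rightarrow> nat \<Rightarrow> nat \<Rightarrow> int" where
  "circ d e j = (-1)^j * (int e - int j) * int ((2*d) choose j)"

lemma circ_L:
  assumes "d \<ge> 1"
  shows "Lv d (circ d e)"
  unfolding Lv_iff
proof (intro allI impI)
  fix k assume k: "k < 2*d-1"
  define p where "p = [:int e, -1:] * monom 1 k"
  have pp: "poly p (int j) = (int e - int j) * int j ^ k" for j
    by (simp add: p_def poly_monom algebra_simps)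
  have "degree p \<le> 1 + k" unfolding p_def
    using degree_mult_le[of "[:int e, -1:]" "monom 1 k"] by (simp add: degree_monom_eq)
  then have dp: "degree p < 2*d" using k by linarith
  have "(\<Sum>j<2*d+1. circ d e j * int j ^ k) = D (2*d) (\<lambda>j. poly p (int j))"
    unfolding D_def pp circ_def
    by (rule sum.cong) (auto simp: mult_ac)
  also have "\<dots> = 0" using D_poly[OF _ dp] assms by simp
  finally show "(\<Sum>j<2*d+1. circ d e j * int j ^ k) = 0" .
qed



lemma kerv_lin:
  assumes "kerv n r a u" "kerv n r a w"
  shows "kerv n r a (\<lambda>j. x * u j + y * w j)"
proof -
  have "(\<Sum>i<n. (x * u i + y * w i) * a i k) = x * (\<Sum>i<n. u i * a i k) + y * (\<Sum>i<n. w i * a i k)" for k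
    by (simp add: sum.distrib sum_distrib_left algebra_simps)
  then show ?thesis using assms by (simp add: kerv_def)
qed

lemma Lv_lin: "Lv d u \<Longrightarrow> Lv d w \<Longrightarrow> Lv d (\<lambda>j. x * u j + y * w j)"
  unfolding Lv_def by (rule kerv_lin)

lemma Lv_neg: "Lv d u \<Longrightarrow> Lv d (\<lambda>j. - u j)"
  using Lv_lin[of d u u "-1" 0] by simp

definition Tset :: "nat \<Rightarrow> nat \<Rightarrow> nat set" where
  "Tset d e = {j. j < 2*d+1 \<and> circ d e j > 0}"

definition Nset :: "nat \<Rightarrow> nat \<Rightarrow> nat set" where
  "Nset d e = {j. j < 2*d+1 \<and> circ d e j < 0}"

lemma circ_e: "circ d e e = 0" by (simp add: circ_def)

lemma circ_nz: "j \<le> 2*d \<Longrightarrow> j \<noteq> e \<Longrightarrow> circ d e j \<noteq> 0"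
  by (simp add: circ_def)

lemma Tset_sub: "Tset d e \<subseteq> {..<2*d+1}" by (auto simp: Tset_def)
lemma Nset_sub: "Nset d e \<subseteq> {..<2*d+1}" by (auto simp: Nset_def)

lemma card_T_N:
  assumes d: "d \<ge> 1" and e: "e \<le> 2*d"
  shows "card (Tset d e) = d" "card (Nset d e) \<ge> d"
proof -
  define j0 where "j0 = (if e = 0 then 1 else (0::nat))"
  have j0: "j0 < 2*d+1" "circ d e j0 \<noteq> 0" using d circ_nz[of j0 d e] by (auto simp: j0_def)
  have L: "Lv d (circ d e)" by (rule circ_L[OF d])
  have cT: "d \<le> card (Tset d e)"
    by (rule sign_lemma[OF L d j0 Tset_sub]) (auto simp: Tset_def)
  have cN: "d \<le> card (Nset d e)"
    by (rule sign_lemma[OF Lv_neg[OF L] d j0(1) _ Nset_sub]) (use j0 in \<open>auto simp: Nset_def\<close>)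
  have "Tset d e \<union> Nset d e \<subseteq> {..<2*d+1} - {e}"
    by (auto simp: Tset_def Nset_def circ_e)
  then have "card (Tset d e \<union> Nset d e) \<le> card ({..<2*d+1} - {e})"
    by (rule card_mono[rotated]) simp
  also have "\<dots> = 2*d" using e by simp
  finally have "card (Tset d e) + card (Nset d e) \<le> 2*d"
    by (subst (asm) card_Un_disjoint) (auto simp: Tset_def Nset_def)
  then show "card (Tset d e) = d" "card (Nset d e) \<ge> d" using cT cN by auto
qed

lemma Tset_distinct:
  assumes "i < i'" "i' \<le> d"
  shows "Tset d (2*i) \<noteq> Tset d (2*i')"
proof -
  have "2*i \<notin> Tset d (2*i)" by (simp add: Tset_def circ_e)
  moreover have "2*i \<in> Tset d (2*i')"
    using assms by (simp add: Tset_def circ_def)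
  ultimately show ?thesis by blast
qed

lemma Tset_distinct': "i \<le> d \<Longrightarrow> i' \<le> d \<Longrightarrow> i \<noteq> i' \<Longrightarrow> Tset d (2*i) \<noteq> Tset d (2*i')"
  by (metis Tset_distinct linorder_neqE_nat)



abbreviation IA :: "nat \<Rightarrow> 'k::field mpoly set" where
  "IA d \<equiv> toric_ideal (2*d+1) (2*d-1) (cyclic_config d int)"

definition Wv :: "nat \<Rightarrow> nat \<Rightarrow> (nat \<Rightarrow> nat \<Rightarrow> int) \<Rightarrow> nat set \<Rightarrow> (nat \<Rightarrow> int) \<Rightarrow> bool" where
  "Wv d r a T w \<longleftrightarrow> Lv d w \<and> kerv (2*d+1) r a w \<and> (\<exists>j<2*d+1. w j \<noteq> 0) \<and>
     (\<forall>j<2*d+1. j \<notin> T \<longrightarrow> w j \<le> 0)"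

lemma bad_vec_oriented:
  assumes sub: "(toric_ideal (2*d+1) r a :: 'k::field mpoly set) \<subseteq> IA d"
    and m: "Poly_Mapping.keys m \<subseteq> {..<2*d+1}" "Poly_Mapping.keys m' \<subseteq> {..<2*d+1}"
    and ex: "expo r a m = expo r a m'"
    and T: "Poly_Mapping.keys m \<subseteq> T" "\<not> Poly_Mapping.keys m' \<subseteq> T"
  shows "\<exists>w. Wv d r a T w"
proof -
  have ne: "m \<noteq> m'" using T by blast
  have "(bin m m' :: 'k mpoly) \<in> toric_ideal (2*d+1) r a" by (rule bin_in_toric[OF m ex])
  then have "(bin m m' :: 'k mpoly) \<in> IA d" using sub by blast
  then have "expo (2*d-1) (cyclic_config d int) m = expo (2*d-1) (cyclic_config d int) m'"
    by (rule toric_bin[OF ne])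
  then have L: "Lv d (diffvec m m')" unfolding Lv_def using expo_eq_iff[OF m] by blast
  have K: "kerv (2*d+1) r a (diffvec m m')" using expo_eq_iff[OF m] ex by blast
  obtain j where j: "Poly_Mapping.lookup m j \<noteq> Poly_Mapping.lookup m' j"
    using ne by (metis poly_mapping_eqI)
  have jn: "j < 2*d+1"
  proof (rule ccontr)
    assume "\<not> j < 2*d+1"
    then have "Poly_Mapping.lookup m j = 0" "Poly_Mapping.lookup m' j = 0"
      using keys_lt[OF m(1), of j] keys_lt[OF m(2), of j] by auto
    then show False using j by simp
  qed
  have nz: "\<exists>j<2*d+1. diffvec m m' j \<noteq> 0" using j jn by (auto simp: diffvec_def)
  have sg: "\<forall>j<2*d+1. j \<notin> T \<longrightarrow> diffvec m m' j \<le> 0"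
  proof (intro allI impI)
    fix j assume "j < 2*d+1" "j \<notin> T"
    then have "Poly_Mapping.lookup m j = 0" using T(1) by (auto simp: in_keys_iff)
    then show "diffvec m m' j \<le> 0" by (simp add: diffvec_def)
  qed
  show ?thesis using L K nz sg by (auto simp: Wv_def)
qed

lemma bad_vec:
  assumes sub: "(toric_ideal (2*d+1) r a :: 'k::field mpoly set) \<subseteq> IA d"
    and bad: "\<not> good (2*d+1) r a T"
  shows "\<exists>w. Wv d r a T w"
proof -
  obtain m m' where m: "Poly_Mapping.keys m \<subseteq> {..<2*d+1}" "Poly_Mapping.keys m' \<subseteq> {..<2*d+1}"
    and ex: "expo r a m = expo r a m'"
    and T: "\<not> (Poly_Mapping.keys m \<subseteq> T \<longleftrightarrow> Poly_Mapping.keys m' \<subseteq> T)"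
    using bad unfolding good_def by blast
  show ?thesis
  proof (cases "Poly_Mapping.keys m \<subseteq> T")
    case True
    then show ?thesis using bad_vec_oriented[OF sub m ex True] T by blast
  next
    case False
    then show ?thesis using bad_vec_oriented[OF sub m(2,1) ex[symmetric]] T by blast
  qed
qed

lemma vander01:
  assumes L: "Lv d z" and d: "d \<ge> 1" and z: "z 0 = 0" "z 1 = 0" and j: "j < 2*d+1"
  shows "z j = 0"
proof (rule vander[OF L d _ _ _ j, of "{2..<2*d+1}"])
  show "{2..<2*d+1} \<subseteq> {..<2*d+1}" by auto
  show "card {2..<2*d+1} \<le> 2*d-1" by simp
  fix j assume "j < 2*d+1" "j \<notin> {2..<2*d+1}"
  then have "j = 0 \<or> j = 1" by auto
  then show "z j = 0" using z by auto
qed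

lemma span_lemma:
  assumes d: "d \<ge> 1" and L1: "Lv d w1" and L2: "Lv d w2"
    and K1: "kerv (2*d+1) r a w1" and K2: "kerv (2*d+1) r a w2"
    and det: "w1 0 * w2 1 - w1 1 * w2 0 \<noteq> 0"
    and Lu: "Lv d u"
  shows "kerv (2*d+1) r a u"
proof -
  define dt where "dt = w1 0 * w2 1 - w1 1 * w2 0"
  define x where "x = u 0 * w2 1 - u 1 * w2 0"
  define y where "y = w1 0 * u 1 - w1 1 * u 0"
  define z where "z = (\<lambda>j. dt * u j + (- 1) * (x * w1 j + y * w2 j))"
  have Lz: "Lv d z" unfolding z_def by (intro Lv_lin Lu L1 L2)
  have z0: "z 0 = 0" "z 1 = 0" unfolding z_def dt_def x_def y_def by (simp_all add: algebra_simps)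
  have zz: "\<And>j. j < 2*d+1 \<Longrightarrow> z j = 0" using vander01[OF Lz d z0] by blast
  have K: "kerv (2*d+1) r a (\<lambda>j. x * w1 j + y * w2 j)" by (rule kerv_lin[OF K1 K2])
  show ?thesis unfolding kerv_def
  proof (intro allI impI)
    fix k assume k: "k < r"
    have "dt * (\<Sum>i<2*d+1. u i * a i k) = (\<Sum>i<2*d+1. (dt * u i) * a i k)"
      by (simp add: sum_distrib_left mult_ac del: sum.lessThan_Suc)
    also have "\<dots> = (\<Sum>i<2*d+1. (x * w1 i + y * w2 i) * a i k)"
    proof (rule sum.cong[OF refl])
      fix i assume "i \<in> {..<2*d+1}"
      then have "z i = 0" using zz by simp
      then have "dt * u i = x * w1 i + y * w2 i" unfolding z_def by simp
      then show "dt * u i * a i k = (x * w1 i + y * w2 i) * a i k" by simp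
    qed
    also have "\<dots> = 0" using K k by (simp add: kerv_def)
    finally show "(\<Sum>i<2*d+1. u i * a i k) = 0" using det by (simp add: dt_def)
  qed
qed

lemma parallel_lemma:
  assumes d: "d \<ge> 1" and L1: "Lv d w1" and L2: "Lv d w2"
    and det: "w1 0 * w2 1 - w1 1 * w2 0 = 0"
    and n1: "\<exists>j<2*d+1. w1 j \<noteq> 0" and n2: "\<exists>j<2*d+1. w2 j \<noteq> 0"
  shows "\<exists>\<alpha> \<beta>. \<alpha> \<noteq> 0 \<and> \<beta> \<noteq> 0 \<and> (\<forall>j<2*d+1. \<alpha> * w1 j = \<beta> * w2 j)"
proof -
  have "\<exists>c. (c = 0 \<or> c = (1::nat)) \<and> w1 c \<noteq> 0"
  proof (rule ccontr)
    assume "\<not> ?thesis"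
    then have "w1 0 = 0" "w1 1 = 0" by auto
    then show False using vander01[OF L1 d] n1 by blast
  qed
  then obtain c where c: "c = 0 \<or> c = 1" "w1 c \<noteq> 0" by blast
  define z where "z = (\<lambda>j. w2 c * w1 j + (- w1 c) * w2 j)"
  have Lz: "Lv d z" unfolding z_def by (intro Lv_lin L1 L2)
  have z0: "z 0 = 0" "z 1 = 0" using c(1) det unfolding z_def by (auto simp: algebra_simps)
  have zz: "\<And>j. j < 2*d+1 \<Longrightarrow> w2 c * w1 j = w1 c * w2 j"
    using vander01[OF Lz d z0] unfolding z_def by (simp add: algebra_simps)
  have "w2 c \<noteq> 0"
  proof
    assume "w2 c = 0"
    then have "\<And>j. j < 2*d+1 \<Longrightarrow> w2 j = 0" using zz c(2) by (metis mult_eq_0_iff mult_zero_left)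
    then show False using n2 by blast
  qed
  then show ?thesis using c(2) zz by blast
qed



lemma pair_lemma:
  assumes d: "d \<ge> 1" and W1: "Wv d r a T1 w1" and W2: "Wv d r a T2 w2"
    and ne: "T1 \<noteq> T2" and c1: "card T1 = d" and c2: "card T2 = d"
    and s1: "T1 \<subseteq> {..<2*d+1}" and s2: "T2 \<subseteq> {..<2*d+1}"
    and nall: "\<not> (\<forall>u. Lv d u \<longrightarrow> kerv (2*d+1) r a u)"
  shows "\<forall>j<2*d+1. sgn (w1 j) = - sgn (w2 j)"
proof -
  have L1: "Lv d w1" and K1: "kerv (2*d+1) r a w1" and n1: "\<exists>j<2*d+1. w1 j \<noteq> 0"
    and g1: "\<forall>j<2*d+1. j \<notin> T1 \<longrightarrow> w1 j \<le> 0" using W1 by (auto simp: Wv_def)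
  have L2: "Lv d w2" and K2: "kerv (2*d+1) r a w2" and n2: "\<exists>j<2*d+1. w2 j \<noteq> 0"
    and g2: "\<forall>j<2*d+1. j \<notin> T2 \<longrightarrow> w2 j \<le> 0" using W2 by (auto simp: Wv_def)
  have det: "w1 0 * w2 1 - w1 1 * w2 0 = 0"
    using span_lemma[OF d L1 L2 K1 K2] nall by blast
  obtain \<alpha> \<beta> where ab: "\<alpha> \<noteq> 0" "\<beta> \<noteq> 0" "\<forall>j<2*d+1. \<alpha> * w1 j = \<beta> * w2 j"
    using parallel_lemma[OF d L1 L2 det n1 n2] by blast
  have sg: "sgn \<alpha> * sgn (w1 j) = sgn \<beta> * sgn (w2 j)" if "j < 2*d+1" for j
    using ab(3) that by (metis sgn_mult)
  show ?thesis
  proof (cases "sgn \<alpha> = sgn \<beta>")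
    case True
    then have same: "sgn (w1 j) = sgn (w2 j)" if "j < 2*d+1" for j
      using sg[OF that] ab(1,2) by (simp add: sgn_0_0)
    have finT1: "finite T1" using s1 finite_subset by blast
    have finT2: "finite T2" using s2 finite_subset by blast
    obtain j0 where j0: "j0 < 2*d+1" "w1 j0 \<noteq> 0" using n1 by blast
    have "d \<le> card (T1 \<inter> T2)"
    proof (rule sign_lemma[OF L1 d j0])
      show "T1 \<inter> T2 \<subseteq> {..<2*d+1}" using s1 by blast
      fix j assume j: "j < 2*d+1" "j \<notin> T1 \<inter> T2"
      show "w1 j \<le> 0"
      proof (cases "j \<in> T1")
        case False then show ?thesis using g1 j by blast
      next
        case True
        then have "w2 j \<le> 0" using g2 j by blast
        then show ?thesis using same[OF j(1)] by (auto simp: sgn_if split: if_splits)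
      qed
    qed
    moreover have "T1 \<inter> T2 \<subset> T1"
    proof
      show "T1 \<inter> T2 \<subseteq> T1" by blast
      show "T1 \<inter> T2 \<noteq> T1"
      proof
        assume "T1 \<inter> T2 = T1"
        then have "T1 \<subseteq> T2" by blast
        then have "T1 = T2" using card_subset_eq[OF finT2] c1 c2 by simp
        then show False using ne by simp
      qed
    qed
    then have "card (T1 \<inter> T2) < d" using psubset_card_mono[OF finT1] c1 by simp
    ultimately show ?thesis by simp
  next
    case False
    then have "sgn \<beta> = - sgn \<alpha>" using ab(1,2) by (auto simp: sgn_if split: if_splits)
    show ?thesis
    proof (intro allI impI)
      fix j assume j: "j < 2*d+1"
      have "sgn \<alpha> * sgn (w1 j) = sgn \<alpha> * (- sgn (w2 j))" using sg[OF j] \<open>sgn \<beta> = - sgn \<alpha>\<close> by simp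
      moreover have "sgn \<alpha> \<noteq> 0" using ab(1) by (simp add: sgn_0_0)
      ultimately show "sgn (w1 j) = - sgn (w2 j)" by (metis mult_left_cancel)
    qed
  qed
qed

lemma three_lemma:
  assumes n1: "\<exists>j<2*d+1. w1 j \<noteq> (0::int)"
    and p12: "\<forall>j<2*d+1. sgn (w1 j) = - sgn (w2 j)"
    and p23: "\<forall>j<2*d+1. sgn (w2 j) = - sgn (w3 j)"
    and p13: "\<forall>j<2*d+1. sgn (w1 j) = - sgn (w3 j)"
  shows False
proof -
  obtain j where j: "j < 2*d+1" "w1 j \<noteq> 0" using n1 by blast
  have "sgn (w1 j) = - sgn (w1 j)" using p12 p23 p13 j(1) by simp
  then have "sgn (w1 j) = 0" by simp
  then show False using j(2) by (simp add: sgn_0_0)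
qed

lemma all_ker_eq:
  assumes d: "d \<ge> 1" and sub: "(toric_ideal (2*d+1) r a :: 'k::field mpoly set) \<subseteq> IA d"
    and all: "\<forall>u. Lv d u \<longrightarrow> kerv (2*d+1) r a u"
  shows "(toric_ideal (2*d+1) r a :: 'k::field mpoly set) = IA d"
proof
  show "(toric_ideal (2*d+1) r a :: 'k::field mpoly set) \<subseteq> IA d" by (rule sub)
  show "(IA d :: 'k mpoly set) \<subseteq> toric_ideal (2*d+1) r a"
  proof (rule toric_sub)
    fix m m' assume m: "Poly_Mapping.keys m \<subseteq> {..<2*d+1}" "Poly_Mapping.keys m' \<subseteq> {..<2*d+1}"
      and e: "expo (2*d-1) (cyclic_config d int) m = expo (2*d-1) (cyclic_config d int) m'"
    have "Lv d (diffvec m m')" unfolding Lv_def using expo_eq_iff[OF m] e by blast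
    then have "kerv (2*d+1) r a (diffvec m m')" using all by blast
    then show "expo r a m = expo r a m'" using expo_eq_iff[OF m] by blast
  qed
qed

lemma card_bad:
  assumes d: "d \<ge> 1" and sub: "(toric_ideal (2*d+1) r a :: 'k::field mpoly set) \<subseteq> IA d"
    and neq: "(toric_ideal (2*d+1) r a :: 'k::field mpoly set) \<noteq> IA d"
  shows "card {i. i \<le> d \<and> \<not> good (2*d+1) r a (Tset d (2*i))} \<le> 2"
proof (rule ccontr)
  let ?B = "{i. i \<le> d \<and> \<not> good (2*d+1) r a (Tset d (2*i))}"
  assume "\<not> card ?B \<le> 2"
  then have "3 \<le> card ?B" by simp
  then obtain C where C: "C \<subseteq> ?B" "card C = 3" by (rule obtain_subset_with_card_n)
  then obtain x y z where xyz: "C = {x, y, z}" "x \<noteq> y" "y \<noteq> z" "x \<noteq> z"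
    unfolding card_3_iff by blast
  have nall: "\<not> (\<forall>u. Lv d u \<longrightarrow> kerv (2*d+1) r a u)"
    using all_ker_eq[OF d sub] neq by blast
  have W: "\<exists>w. Wv d r a (Tset d (2*i)) w" if "i \<in> ?B" for i
    using bad_vec[OF sub] that by blast
  have inB: "x \<in> ?B" "y \<in> ?B" "z \<in> ?B" using C xyz by auto
  obtain wx where wx: "Wv d r a (Tset d (2*x)) wx" using W[OF inB(1)] by blast
  obtain wy where wy: "Wv d r a (Tset d (2*y)) wy" using W[OF inB(2)] by blast
  obtain wz where wz: "Wv d r a (Tset d (2*z)) wz" using W[OF inB(3)] by blast
  have le: "x \<le> d" "y \<le> d" "z \<le> d" using inB by auto
  have cT: "card (Tset d (2*i)) = d" if "i \<le> d" for i using card_T_N(1)[OF d] that by simp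
  have p12: "\<forall>j<2*d+1. sgn (wx j) = - sgn (wy j)"
    by (rule pair_lemma[OF d wx wy Tset_distinct'[OF le(1,2) xyz(2)] cT[OF le(1)] cT[OF le(2)]
          Tset_sub Tset_sub nall])
  have p23: "\<forall>j<2*d+1. sgn (wy j) = - sgn (wz j)"
    by (rule pair_lemma[OF d wy wz Tset_distinct'[OF le(2,3) xyz(3)] cT[OF le(2)] cT[OF le(3)]
          Tset_sub Tset_sub nall])
  have p13: "\<forall>j<2*d+1. sgn (wx j) = - sgn (wz j)"
    by (rule pair_lemma[OF d wx wz Tset_distinct'[OF le(1,3) xyz(4)] cT[OF le(1)] cT[OF le(3)]
          Tset_sub Tset_sub nall])
  have n1: "\<exists>j<2*d+1. wx j \<noteq> 0" using wx by (simp add: Wv_def)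
  show False by (rule three_lemma[OF n1 p12 p23 p13])
qed

lemma find_good:
  assumes d: "d \<ge> 1" and sd: "2*s < d+1"
    and sub: "\<forall>i<s. (toric_ideal (2*d+1) (r i) (a i) :: 'k::field mpoly set) \<subseteq> IA d"
    and neq: "\<forall>i<s. (toric_ideal (2*d+1) (r i) (a i) :: 'k::field mpoly set) \<noteq> IA d"
  shows "\<exists>i0\<le>d. \<forall>i<s. good (2*d+1) (r i) (a i) (Tset d (2*i0))"
proof (rule ccontr)
  define B where "B i = {i'. i' \<le> d \<and> \<not> good (2*d+1) (r i) (a i) (Tset d (2*i'))}" for i
  assume "\<not> ?thesis"
  then have cov: "{..d} \<subseteq> (\<Union>i<s. B i)" by (auto simp: B_def)
  have cB: "card (B i) \<le> 2" if "i < s" for i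
    unfolding B_def using card_bad[OF d, of "r i" "a i", where 'k='k] sub neq that by blast
  have finU: "finite (\<Union>i<s. B i)" by (auto simp: B_def)
  have "d + 1 = card {..d}" by simp
  also have "\<dots> \<le> card (\<Union>i<s. B i)" by (rule card_mono[OF finU cov])
  also have "\<dots> \<le> (\<Sum>i<s. card (B i))" by (rule card_UN_le) simp
  also have "\<dots> \<le> (\<Sum>i<s. 2)" by (rule sum_mono) (use cB in simp)
  also have "\<dots> = 2 * s" by simp
  finally show False using sd by simp
qed



lemma witness:
  assumes d: "d \<ge> 1" and i0: "i0 \<le> d"
  shows "\<exists>f. f \<in> (IA d :: 'k::field mpoly set) \<and> ev (Tset d (2*i0)) f = 1"
proof -
  define e where "e = 2*i0"
  have e: "e \<le> 2*d" using i0 by (simp add: e_def)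
  define fp where "fp = (\<lambda>j. if j < 2*d+1 then nat (circ d e j) else 0)"
  define fm where "fm = (\<lambda>j. if j < 2*d+1 then nat (- circ d e j) else 0)"
  have finp: "finite {j. fp j \<noteq> 0}"
    by (rule finite_subset[of _ "{..<2*d+1}"]) (auto simp: fp_def)
  have finm: "finite {j. fm j \<noteq> 0}"
    by (rule finite_subset[of _ "{..<2*d+1}"]) (auto simp: fm_def)
  define mp where "mp = Abs_poly_mapping fp"
  define mm where "mm = Abs_poly_mapping fm"
  have lp: "Poly_Mapping.lookup mp = fp" unfolding mp_def using finp by simp
  have lm: "Poly_Mapping.lookup mm = fm" unfolding mm_def using finm by simp
  have kp: "Poly_Mapping.keys mp = Tset d e"
    by (auto simp: in_keys_iff lp fp_def Tset_def split: if_splits)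
  have km: "Poly_Mapping.keys mm = Nset d e"
    by (auto simp: in_keys_iff lm fm_def Nset_def split: if_splits)
  have vp: "Poly_Mapping.keys mp \<subseteq> {..<2*d+1}" using kp Tset_sub by simp
  have vm: "Poly_Mapping.keys mm \<subseteq> {..<2*d+1}" using km Nset_sub by simp
  have dv: "diffvec mp mm j = circ d e j" if "j < 2*d+1" for j
    using that by (simp add: diffvec_def lp lm fp_def fm_def)
  have "Lv d (diffvec mp mm)"
    using circ_L[OF d, of e] unfolding Lv_iff by (simp add: dv del: sum.lessThan_Suc)
  then have ex: "expo (2*d-1) (cyclic_config d int) mp = expo (2*d-1) (cyclic_config d int) mm"
    unfolding Lv_def using expo_eq_iff[OF vp vm] by blast
  have fI: "(bin mp mm :: 'k mpoly) \<in> IA d" by (rule bin_in_toric[OF vp vm ex])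
  have "Nset d e \<noteq> {}" using card_T_N(2)[OF d e] d by auto
  moreover have "Nset d e \<inter> Tset d e = {}" by (auto simp: Nset_def Tset_def)
  ultimately have "\<not> Nset d e \<subseteq> Tset d e" by blast
  then have "ev (Tset d e) (bin mp mm :: 'k mpoly) = 1"
    by (simp add: bin_def ev_diff ev_single chi_def kp km)
  then show ?thesis using fI e_def by blast
qed

lemma mem_ideal_sum:
  assumes "i < s" "f \<in> I i" "\<forall>j<s. (0::'k::field mpoly) \<in> I j"
  shows "f \<in> ideal_sum s I"
proof -
  define g where "g = (\<lambda>j. if j = i then f else 0)"
  have "(\<Sum>j<s. g j) = f" using assms(1) by (simp add: g_def)
  moreover have "\<forall>j<s. g j \<in> I j" using assms by (simp add: g_def)
  ultimately show ?thesis unfolding ideal_sum_def by blast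
qed

lemma ev_ideal_sum_zero:
  assumes "\<forall>i<s. good n (r i) (a i) T"
    and "g \<in> ideal_sum s (\<lambda>i. (toric_ideal n (r i) (a i) :: 'k::field mpoly set))"
  shows "ev T g = 0"
proof -
  obtain h where h: "g = (\<Sum>i<s. h i)" "\<forall>i<s. h i \<in> (toric_ideal n (r i) (a i) :: 'k mpoly set)"
    using assms(2) unfolding ideal_sum_def by blast
  have "ev T g = (\<Sum>i<s. ev T (h i))" using h(1) by (simp add: ev_sum)
  also have "\<dots> = 0"
    by (rule sum.neutral) (use ev_toric_zero assms(1) h(2) in blast)
  finally show ?thesis .
qed

theorem proposition4p9:
  assumes "N > (0::nat)"
  shows "\<exists>(d::nat) (t::nat \<Rightarrow> int). d \<ge> 2 \<and> strict_mono_on {..<2*d+1} t \<and>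
    (\<forall>s<N. \<not> has_splitting (2*d+1)
        (toric_ideal (2*d+1) (2*d-1) (cyclic_config d t) :: 'k::field mpoly set) s) \<and>
    (\<forall>s<N. \<not> has_rad_splitting (2*d+1)
        (toric_ideal (2*d+1) (2*d-1) (cyclic_config d t) :: 'k::field mpoly set) s)"
proof -
  define d where "d = 2*N"
  have d2: "d \<ge> 2" using assms by (simp add: d_def)
  then have d1: "d \<ge> 1" by simp
  have sm: "strict_mono_on {..<2*d+1} (int :: nat \<Rightarrow> int)"
    by (auto simp: strict_mono_on_def)
  have A: "\<not> has_splitting (2*d+1) (IA d :: 'k mpoly set) s" if s: "s < N" for s
  proof
    assume "has_splitting (2*d+1) (IA d :: 'k mpoly set) s"
    then obtain r a where neq: "\<forall>i<s. (toric_ideal (2*d+1) (r i) (a i) :: 'k mpoly set) \<noteq> IA d"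
      and eq: "(IA d :: 'k mpoly set) = ideal_sum s (\<lambda>i. toric_ideal (2*d+1) (r i) (a i))"
      unfolding has_splitting_def by blast
    have sub: "\<forall>i<s. (toric_ideal (2*d+1) (r i) (a i) :: 'k mpoly set) \<subseteq> IA d"
    proof (intro allI impI subsetI)
      fix i f assume "i < s" "f \<in> (toric_ideal (2*d+1) (r i) (a i) :: 'k mpoly set)"
      then show "f \<in> IA d" unfolding eq by (intro mem_ideal_sum) (auto simp: zero_toric)
    qed
    have sd: "2*s < d+1" using s by (simp add: d_def)
    obtain i0 where i0: "i0 \<le> d" "\<forall>i<s. good (2*d+1) (r i) (a i) (Tset d (2*i0))"
      using find_good[OF d1 sd sub neq] by blast
    obtain f where f: "f \<in> (IA d :: 'k mpoly set)" "ev (Tset d (2*i0)) f = 1"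
      using witness[OF d1 i0(1)] by blast
    have "ev (Tset d (2*i0)) f = 0"
      using ev_ideal_sum_zero[OF i0(2)] f(1) eq by blast
    then show False using f(2) by simp
  qed
  have B: "\<not> has_rad_splitting (2*d+1) (IA d :: 'k mpoly set) s" if s: "s < N" for s
  proof
    assume "has_rad_splitting (2*d+1) (IA d :: 'k mpoly set) s"
    then obtain r a where neq: "\<forall>i<s. (toric_ideal (2*d+1) (r i) (a i) :: 'k mpoly set) \<noteq> IA d"
      and eq: "(IA d :: 'k mpoly set) = radical_in (2*d+1) (ideal_sum s (\<lambda>i. toric_ideal (2*d+1) (r i) (a i)))"
      unfolding has_rad_splitting_def by blast
    have sub: "\<forall>i<s. (toric_ideal (2*d+1) (r i) (a i) :: 'k mpoly set) \<subseteq> IA d"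
    proof (intro allI impI subsetI)
      fix i f assume i: "i < s" and f: "f \<in> (toric_ideal (2*d+1) (r i) (a i) :: 'k mpoly set)"
      have "f \<in> ideal_sum s (\<lambda>i. toric_ideal (2*d+1) (r i) (a i))"
        using i f by (intro mem_ideal_sum) (auto simp: zero_toric)
      moreover have "f \<in> poly_ring (2*d+1)" using f by (simp add: toric_ideal_def)
      ultimately have "f \<in> radical_in (2*d+1) (ideal_sum s (\<lambda>i. toric_ideal (2*d+1) (r i) (a i)))"
        unfolding radical_in_def by (auto intro!: exI[of _ 1])
      then show "f \<in> IA d" using eq by simp
    qed
    have sd: "2*s < d+1" using s by (simp add: d_def)
    obtain i0 where i0: "i0 \<le> d" "\<forall>i<s. good (2*d+1) (r i) (a i) (Tset d (2*i0))"
      using find_good[OF d1 sd sub neq] by blast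
    obtain f where f: "f \<in> (IA d :: 'k mpoly set)" "ev (Tset d (2*i0)) f = 1"
      using witness[OF d1 i0(1)] by blast
    obtain k where k: "k > 0" "f ^ k \<in> ideal_sum s (\<lambda>i. toric_ideal (2*d+1) (r i) (a i))"
      using f(1) eq unfolding radical_in_def by blast
    have "ev (Tset d (2*i0)) (f ^ k) = 0"
      by (rule ev_ideal_sum_zero[OF i0(2) k(2)])
    then show False using f(2) by (simp add: ev_power)
  qed
  show ?thesis using d2 sm A B by blast
qed


end
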